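(* Let $\Pi$ be a finite projective plane and let $\mathcal{S}$ be a semioval in $\Pi$. Suppose that $\mathcal{T}\subset\mathcal{S}$ is a pointset with the property that for every line $\ell$ which is a secant line to $\mathcal{S}$ (i.e. $|\mathcal{S}\cap\ell|\geq 2$) the inequality $|\mathcal{S}\cap\ell|\geq|\mathcal{T}\cap\ell|+2$ holds. Then $\mathcal{S}\setminus\mathcal{T}$ is a semioval, and $\mathcal{S}$ contains semiovals of size $k$ for every integer $k$ satisfying $|\mathcal{S}\setminus\mathcal{T}|\leq k\leq|\mathcal{S}|$.
   Context: A semioval in a projective plane is a non-empty pointset $\mathcal{S}$ such that for every point $P\in\mathcal{S}$ there is a unique line $t_P$ with $\mathcal{S}\cap t_P=\{P\}$ (the tangent line at $P$). *)

theory Defs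
  imports Main
begin

definition projective_plane :: "'p set \<Rightarrow> 'l set \<Rightarrow> ('p \<Rightarrow> 'l \<Rightarrow> bool) \<Rightarrow> bool" where
  "projective_plane Pts Lns inc \<longleftrightarrow>
     (\<forall>P\<in>Pts. \<forall>Q\<in>Pts. P \<noteq> Q \<longrightarrow> (\<exists>!l. l \<in> Lns \<and> inc P l \<and> inc Q l)) \<and>
     (\<forall>l\<in>Lns. \<forall>m\<in>Lns. l \<noteq> m \<longrightarrow> (\<exists>!P. P \<in> Pts \<and> inc P l \<and> inc P m)) \<and>
     (\<exists>A B C D. {A, B, C, D} \<subseteq> Pts \<and> card {A, B, C, D} = 4 \<and>
        (\<forall>l\<in>Lns. card {X \<in> {A, B, C, D}. inc X l} \<le> 2))"

definition finite_projective_plane :: "'p set \<Rightarrow> 'l set \<Rightarrow> ('p \<Rightarrow> 'l \<Rightarrow> bool) \<Rightarrow> bool" where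
  "finite_projective_plane Pts Lns inc \<longleftrightarrow>
     projective_plane Pts Lns inc \<and> finite Pts \<and> finite Lns"

definition on_line :: "('p \<Rightarrow> 'l \<Rightarrow> bool) \<Rightarrow> 'p set \<Rightarrow> 'l \<Rightarrow> 'p set" where
  "on_line inc S l = {P \<in> S. inc P l}"

definition semioval :: "'p set \<Rightarrow> 'l set \<Rightarrow> ('p \<Rightarrow> 'l \<Rightarrow> bool) \<Rightarrow> 'p set \<Rightarrow> bool" where
  "semioval Pts Lns inc S \<longleftrightarrow>
     S \<subseteq> Pts \<and> S \<noteq> {} \<and>
     (\<forall>P\<in>S. \<exists>!t. t \<in> Lns \<and> on_line inc S t = {P})"

end

theory Submission
  imports Defs
begin

lemma sub_semioval:
  assumes fin: "finite Pts"
    and so: "semioval Pts Lns inc S"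
    and TS: "T \<subset> S" and T'T: "T' \<subseteq> T"
    and sec: "\<forall>l\<in>Lns. card (on_line inc S l) \<ge> 2 \<longrightarrow>
            card (on_line inc S l) \<ge> card (on_line inc T l) + 2"
  shows "semioval Pts Lns inc (S - T')"
proof -
  have SP: "S \<subseteq> Pts" and tan: "\<forall>P\<in>S. \<exists>!t. t \<in> Lns \<and> on_line inc S t = {P}"
    using so unfolding semioval_def by auto
  have finS: "finite S" using fin SP finite_subset by blast
  have ne: "S - T' \<noteq> {}" using TS T'T by blast
  have "\<exists>!t. t \<in> Lns \<and> on_line inc (S - T') t = {P}" if PS: "P \<in> S - T'" for P
  proof -
    obtain t where t: "t \<in> Lns" "on_line inc S t = {P}" and tu: "\<And>m. m \<in> Lns \<Longrightarrow> on_line inc S m = {P} \<Longrightarrow> m = t"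
      using tan PS by blast
    have t2: "on_line inc (S - T') t = {P}" using t(2) PS unfolding on_line_def by auto
    have "m = t" if m: "m \<in> Lns" "on_line inc (S - T') m = {P}" for m
    proof (rule ccontr)
      assume "m \<noteq> t"
      hence ne1: "on_line inc S m \<noteq> {P}" using tu m(1) by blast
      have Pm: "P \<in> on_line inc S m" using m(2) unfolding on_line_def by auto
      have fm: "finite (on_line inc S m)" using finS unfolding on_line_def by auto
      have "card (on_line inc S m) \<noteq> 1" using Pm ne1 card_1_singletonE by (metis singletonD)
      moreover have "card (on_line inc S m) \<noteq> 0" using Pm fm by auto
      ultimately have c2: "card (on_line inc S m) \<ge> 2" by linarith
      have sub: "on_line inc S m \<subseteq> insert P (on_line inc T m)"
        using m(2) T'T unfolding on_line_def by blast
      have fT: "finite (on_line inc T m)" using finS TS unfolding on_line_def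
        by (metis (no_types, lifting) mem_Collect_eq psubsetD rev_finite_subset subsetI)
      have "card (on_line inc S m) \<le> card (insert P (on_line inc T m))"
        using sub fT by (simp add: card_mono)
      also have "\<dots> \<le> card (on_line inc T m) + 1" using fT by (simp add: card_insert_if)
      finally show False using sec m(1) c2 by fastforce
    qed
    thus ?thesis using t(1) t2 by blast
  qed
  thus ?thesis unfolding semioval_def using SP ne by blast
qed

theorem mainTheorem1:
  fixes Pts :: "'p set" and Lns :: "'l set" and inc :: "'p \<Rightarrow> 'l \<Rightarrow> bool"
    and S T :: "'p set"
  assumes "finite_projective_plane Pts Lns inc"
    and "semioval Pts Lns inc S"
    and "T \<subset> S"
    and "\<forall>l\<in>Lns. card (on_line inc S l) \<ge> 2 \<longrightarrow>
            card (on_line inc S l) \<ge> card (on_line inc T l) + 2"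
  shows "semioval Pts Lns inc (S - T) \<and>
         (\<forall>k::nat. card (S - T) \<le> k \<and> k \<le> card S \<longrightarrow>
            (\<exists>S'. S' \<subseteq> S \<and> semioval Pts Lns inc S' \<and> card S' = k))"
proof -
  have fin: "finite Pts" using assms(1) unfolding finite_projective_plane_def by auto
  have finS: "finite S" using fin assms(2) finite_subset unfolding semioval_def by blast
  have finT: "finite T" using finS assms(3) finite_subset by blast
  have cST: "card (S - T) = card S - card T" using assms(3) finT by (simp add: card_Diff_subset)
  have cTS: "card T \<le> card S" using assms(3) finS by (simp add: card_mono)
  show ?thesis
  proof
    show "semioval Pts Lns inc (S - T)" using sub_semioval[OF fin assms(2) assms(3) _ assms(4)] by blast
  next
    show "\<forall>k::nat. card (S - T) \<le> k \<and> k \<le> card S \<longrightarrow>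
            (\<exists>S'. S' \<subseteq> S \<and> semioval Pts Lns inc S' \<and> card S' = k)"
    proof (intro allI impI)
      fix k assume k: "card (S - T) \<le> k \<and> k \<le> card S"
      have "card S - k \<le> card T" using k cST cTS by linarith
      then obtain T' where T': "T' \<subseteq> T" "card T' = card S - k" using obtain_subset_with_card_n by metis
      have fT': "finite T'" using T'(1) finT finite_subset by blast
      have "card (S - T') = k" using T' assms(3) fT' k by (simp add: card_Diff_subset)
      moreover have "semioval Pts Lns inc (S - T')"
        using sub_semioval[OF fin assms(2) assms(3) T'(1) assms(4)] .
      ultimately show "\<exists>S'. S' \<subseteq> S \<and> semioval Pts Lns inc S' \<and> card S' = k" by blast
    qed
  qed
qed

end
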